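(* Let $X$ be a rank-one subshift with cut sequence $(r_n)$ and spacer sequence $(s_{n,i})$, and suppose there are nonnegative integers $c<d$ such that for all sufficiently large $n$: $s_{n,r_n}=0$ and $s_{n,i}\in\{c,d\}$ for all $0\le i<r_n$, with both values occurring among $0\le i<r_n$. Then there exists a rank-one subshift generating the same language whose spacer sequence $(\tilde s_{n,i})$ (with the same cut sequence) satisfies, for all sufficiently large $n$, $\tilde s_{n,r_n}=0$ and $\tilde s_{n,i}\in\{0,d-c\}$ for all $0\le i<r_n$, with both values occurring.
   Context: A rank-one subshift with cut sequence $(r_n)_{n\ge1}$ (positive integers) and spacer sequence $(s_{n,i})_{n\ge1,\,0\le i\le r_n}$ (nonnegative integers) is defined by $B_1=0$, $B_{n+1}=B_n1^{s_{n,0}}B_n1^{s_{n,1}}\cdots B_n1^{s_{n,r_n}}$; it is the set of $x\in\{0,1\}^{\mathbb Z}$ all of whose finite subwords are subwords of some $B_n$. Its language is the set of finite words occurring in its elements. *)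

theory Defs
  imports Main "HOL-Library.Sublist"
begin

text \<open>Words over the alphabet {0,1} are lists of naturals. The cut sequence is
  r :: nat => nat and the spacer sequence is s :: nat => nat => nat, where s n i is
  the spacer s_{n,i}; only indices n >= 1 are meaningful.
  rk1_block r s n is the block B_n for n >= 1 (the value at n = 0 is junk).\<close>

fun rk1_block :: "(nat \<Rightarrow> nat) \<Rightarrow> (nat \<Rightarrow> nat \<Rightarrow> nat) \<Rightarrow> nat \<Rightarrow> nat list" where
  "rk1_block r s 0 = [0]"
| "rk1_block r s (Suc n) =
     (if n = 0 then [0]
      else concat (map (\<lambda>i. rk1_block r s n @ replicate (s n i) 1) [0..<Suc (r n)]))"

definition seg :: "(int \<Rightarrow> nat) \<Rightarrow> int \<Rightarrow> nat \<Rightarrow> nat list" where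
  "seg x i k = map (\<lambda>j. x (i + int j)) [0..<k]"

definition rank_one_subshift :: "(nat \<Rightarrow> nat) \<Rightarrow> (nat \<Rightarrow> nat \<Rightarrow> nat) \<Rightarrow> (int \<Rightarrow> nat) set" where
  "rank_one_subshift r s =
     {x. (\<forall>i. x i \<in> {0, 1}) \<and>
         (\<forall>i k. \<exists>n\<ge>1. sublist (seg x i k) (rk1_block r s n))}"

definition rank_one_language :: "(nat \<Rightarrow> nat) \<Rightarrow> (nat \<Rightarrow> nat \<Rightarrow> nat) \<Rightarrow> nat list set" where
  "rank_one_language r s =
     {w. \<exists>x\<in>rank_one_subshift r s. \<exists>i. w = seg x i (length w)}"

end

theory Submission
  imports Defs
begin

lemma concat_upt_Suc: "concat (map g [0..<Suc R]) = concat (map g [0..<R]) @ g R"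
  by simp

lemma blk_agree:
  "(\<forall>m<n. s' m = s m) \<Longrightarrow> rk1_block r s' n = rk1_block r s n"
  by (induction n) auto

lemma blk_prefix:
  assumes "n \<ge> 1" shows "prefix (rk1_block r s n) (rk1_block r s (Suc n))"
proof -
  have "[0..<Suc (r n)] = 0 # [1..<Suc (r n)]" by (simp add: upt_conv_Cons)
  then show ?thesis using assms by simp
qed

lemma blk_sublist_mono:
  assumes "1 \<le> n" "n \<le> m" "sublist w (rk1_block r s n)"
  shows "sublist w (rk1_block r s m)"
  using assms(2,3)
proof (induction m rule: dec_induct)
  case base then show ?case by simp
next
  case (step m)
  have "prefix (rk1_block r s m) (rk1_block r s (Suc m))"
    using blk_prefix[of m] step assms(1) by simp
  then show ?case using step
    by (meson prefix_imp_sublist sublist_order.dual_order.trans)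
qed

theorem proposition2:
  fixes r :: "nat \<Rightarrow> nat" and s :: "nat \<Rightarrow> nat \<Rightarrow> nat" and c d :: nat
  assumes "\<forall>n\<ge>1. r n \<ge> 1"
    and "c < d"
    and "\<exists>N. \<forall>n\<ge>N. s n (r n) = 0 \<and> (\<forall>i<r n. s n i \<in> {c, d})
                 \<and> (\<exists>i<r n. s n i = c) \<and> (\<exists>i<r n. s n i = d)"
  shows "\<exists>s' :: nat \<Rightarrow> nat \<Rightarrow> nat.
           rank_one_language r s' = rank_one_language r s \<and>
           (\<exists>N. \<forall>n\<ge>N. s' n (r n) = 0 \<and> (\<forall>i<r n. s' n i \<in> {0, d - c})
                 \<and> (\<exists>i<r n. s' n i = 0) \<and> (\<exists>i<r n. s' n i = d - c))"
proof -
  obtain N0 where N0: "\<forall>n\<ge>N0. s n (r n) = 0 \<and> (\<forall>i<r n. s n i \<in> {c, d})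
                 \<and> (\<exists>i<r n. s n i = c) \<and> (\<exists>i<r n. s n i = d)"
    using assms(3) by blast
  define N where "N = N0 + 2"
  define s' where "s' = (\<lambda>n i. if N \<le> n then s n i - c
       else if n = N - 1 \<and> i = r n then s n i + c else s n i)"
  have N: "\<forall>n\<ge>N. s n (r n) = 0 \<and> (\<forall>i<r n. s n i \<in> {c, d})
                 \<and> (\<exists>i<r n. s n i = c) \<and> (\<exists>i<r n. s n i = d)"
    using N0 N_def by auto
  have lowN: "rk1_block r s' (N - 1) = rk1_block r s (N - 1)"
    by (rule blk_agree) (auto simp: s'_def fun_eq_iff)
  have key: "rk1_block r s' n = rk1_block r s n @ replicate c 1" if "n \<ge> N" for n
    using that
  proof (induction n rule: dec_induct)
    case base
    obtain M where M: "N = Suc M" "M \<noteq> 0" using N_def by auto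
    let ?R = "r M"
    let ?B = "rk1_block r s M"
    have lowM: "rk1_block r s' M = ?B" using lowN M by simp
    have lt: "\<not> N \<le> M" using M by simp
    have e1: "rk1_block r s' N = concat (map (\<lambda>i. ?B @ replicate (s' M i) 1) [0..<Suc ?R])"
      unfolding M(1) rk1_block.simps(2) using M(2) lowM by simp
    have e2: "map (\<lambda>i. ?B @ replicate (s' M i) 1) [0..<?R]
          = map (\<lambda>i. ?B @ replicate (s M i) 1) [0..<?R]"
      by (rule map_cong[OF refl]) (use lt M in \<open>auto simp: s'_def\<close>)
    have e3: "s' M ?R = s M ?R + c" using lt M by (simp add: s'_def)
    have e4: "rk1_block r s N = concat (map (\<lambda>i. ?B @ replicate (s M i) 1) [0..<Suc ?R])"
      unfolding M(1) rk1_block.simps(2) using M(2) by simp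
    show ?case
      unfolding e1 e4 concat_upt_Suc e2 e3 replicate_add by simp
  next
    case (step n)
    let ?R = "r n"
    let ?B = "rk1_block r s n"
    have n0: "n \<noteq> 0" "N \<le> n" using step N_def by auto
    have "rk1_block r s' (Suc n) = concat (map (\<lambda>i. (?B @ replicate c 1) @ replicate (s' n i) 1) [0..<Suc ?R])"
      using n0 step.IH by simp
    also have "\<dots> = concat (map (\<lambda>i. ?B @ replicate (s n i) 1) [0..<?R])
        @ ?B @ replicate c 1"
    proof -
      have me: "map (\<lambda>i. (?B @ replicate c 1) @ replicate (s' n i) 1) [0..<?R]
          = map (\<lambda>i. ?B @ replicate (s n i) 1) [0..<?R]"
      proof (rule map_cong[OF refl])
        fix i assume "i \<in> set [0..<?R]"
        then have "s n i \<in> {c, d}" using N n0 by auto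
        then have "c \<le> s n i" using assms(2) by auto
        then have "replicate c (1::nat) @ replicate (s n i - c) 1 = replicate (s n i) 1"
          by (metis le_add_diff_inverse replicate_add)
        then show "(?B @ replicate c 1) @ replicate (s' n i) 1 = ?B @ replicate (s n i) 1"
          using n0 by (simp add: s'_def)
      qed
      moreover have "s' n ?R = 0" using N n0 by (simp add: s'_def)
      ultimately show ?thesis unfolding concat_upt_Suc me by simp
    qed
    also have "\<dots> = rk1_block r s (Suc n) @ replicate c 1"
      using n0 N by simp
    finally show ?case .
  qed
  have W: "(\<exists>n\<ge>1. sublist w (rk1_block r s' n)) = (\<exists>n\<ge>1. sublist w (rk1_block r s n))" for w
  proof
    assume "\<exists>n\<ge>1. sublist w (rk1_block r s' n)"
    then obtain n where n: "n \<ge> 1" "sublist w (rk1_block r s' n)" by blast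
    let ?m = "max n N"
    have m: "sublist w (rk1_block r s' ?m)" using blk_sublist_mono[OF n(1) _ n(2)] by simp
    have mN: "?m \<ge> N" "?m \<ge> 1" using N_def by auto
    have "0 < r ?m" using assms(1) mN by auto
    then have "s ?m 0 \<in> {c, d}" using N mN by auto
    then have cle: "c \<le> s ?m 0" using assms(2) by auto
    have "[0..<Suc (r ?m)] = 0 # [1..<Suc (r ?m)]" by (simp add: upt_conv_Cons)
    then have "prefix (rk1_block r s ?m @ replicate (s ?m 0) 1) (rk1_block r s (Suc ?m))"
      using mN N_def by simp
    moreover have "prefix (rk1_block r s ?m @ replicate c 1) (rk1_block r s ?m @ replicate (s ?m 0) 1)"
      using cle by (metis le_add_diff_inverse replicate_add append_assoc prefix_append prefix_order.refl
          append_prefixD prefixI)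
    ultimately have h: "sublist (rk1_block r s' ?m) (rk1_block r s (Suc ?m))"
      using key[OF mN(1)] by (metis prefix_imp_sublist prefix_order.dual_order.trans)
    show "\<exists>n\<ge>1. sublist w (rk1_block r s n)"
    proof -
      have "sublist w (rk1_block r s (Suc ?m))" using m h by (rule sublist_order.order_trans)
      then show ?thesis by (intro exI[of _ "Suc ?m"]) simp
    qed
  next
    assume "\<exists>n\<ge>1. sublist w (rk1_block r s n)"
    then obtain n where n: "n \<ge> 1" "sublist w (rk1_block r s n)" by blast
    let ?m = "max n N"
    have m: "sublist w (rk1_block r s ?m)" using blk_sublist_mono[OF n(1) _ n(2)] by simp
    have mN: "?m \<ge> N" "?m \<ge> 1" using N_def by auto
    have "sublist (rk1_block r s ?m) (rk1_block r s' ?m)" using key[OF mN(1)] by simp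
    then show "\<exists>n\<ge>1. sublist w (rk1_block r s' n)"
      using m mN by (meson sublist_order.dual_order.trans)
  qed
  have "rank_one_subshift r s' = rank_one_subshift r s"
    unfolding rank_one_subshift_def using W by simp
  then have L: "rank_one_language r s' = rank_one_language r s"
    unfolding rank_one_language_def by simp
  have "\<forall>n\<ge>N. s' n (r n) = 0 \<and> (\<forall>i<r n. s' n i \<in> {0, d - c})
                 \<and> (\<exists>i<r n. s' n i = 0) \<and> (\<exists>i<r n. s' n i = d - c)"
  proof (intro allI impI)
    fix n assume n: "n \<ge> N"
    have h: "s n (r n) = 0" "\<forall>i<r n. s n i \<in> {c, d}" "\<exists>i<r n. s n i = c" "\<exists>i<r n. s n i = d"
      using N n by auto
    show "s' n (r n) = 0 \<and> (\<forall>i<r n. s' n i \<in> {0, d - c})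
                 \<and> (\<exists>i<r n. s' n i = 0) \<and> (\<exists>i<r n. s' n i = d - c)"
      using h n unfolding s'_def by auto
  qed
  then show ?thesis using L by blast
qed

end
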